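(* Let $H=(E,\{X_i:i\in[n]\})$ be a multi-hypergraph and let $t_1,\dots,t_n$ be integers with $0\le t_i\le|X_i|$. Let $\rho=\sum_{i=1}^n r_{M_i}$ where $M_i=U_{t_i,X_i}\oplus U_{0,E-X_i}$. For a positive integer $k$, define a map $\phi$ on the set of proper $k$-colorings $c:[n]\to[k]$ of the line graph $G_H$ by $\phi(c)=(N_1,\dots,N_k)$, where for each $i\in[k]$ $$N_i=\Bigl(\bigoplus_{h\,:\,c(h)=i}U_{t_h,X_h}\Bigr)\oplus U_{0,Y},\qquad Y=E-\bigcup_{h\,:\,c(h)=i}X_h.$$ Then $\phi(c)\in\Delta_\rho^k$ for every such coloring $c$. Consequently $\chi(\rho)\le\chi(G_H)$. If moreover $H$ is a hypergraph and, for all $i\in[n]$, either $t_i=1$ or $0<t_i<|X_i|$, then $\phi$ is injective.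
   Context: A polymatroid on a finite set $E$ is a function $\rho:2^E\to\mathbb{Z}$ that is normalized, non-decreasing and submodular. A multi-hypergraph is a pair $H=(E,\mathcal{E})$ with $E$ finite and $\mathcal{E}=\{X_i:i\in[n]\}$ a finite multiset of subsets of $E$; it is a hypergraph if $\mathcal{E}$ is a set of nonempty subsets. The line graph $G_H$ has vertex set $[n]=\{1,\dots,n\}$, with $ij$ an edge iff $i\ne j$ and $X_i\cap X_j\ne\emptyset$. $U_{r,X}$ denotes the rank-$r$ uniform matroid on $X$. For a polymatroid $\rho$ on $E$ and positive integer $k$, $\Delta_\rho^k$ is the set of $k$-tuples $(N_1,\dots,N_k)$ of matroids on $E$ with $\rho=r_{N_1}+\cdots+r_{N_k}$. The chromatic number $\chi(\rho)$ of $\rho$ is the least positive integer $k$ with $\Delta_\rho^k\ne\emptyset$ ($\infty$ if none). *)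

theory Defs
  imports Main "HOL-Library.FuncSet" "HOL-Library.Extended_Nat"
begin

text \<open>A matroid is represented as a pair (ground set, family of independent sets).\<close>
type_synonym 'a matroid = "'a set \<times> 'a set set"

definition matroid_on :: "'a set \<Rightarrow> 'a matroid \<Rightarrow> bool" where
  "matroid_on E M \<longleftrightarrow> fst M = E \<and> finite E \<and> snd M \<subseteq> Pow E \<and> {} \<in> snd M
     \<and> (\<forall>I J. J \<in> snd M \<longrightarrow> I \<subseteq> J \<longrightarrow> I \<in> snd M)
     \<and> (\<forall>I J. I \<in> snd M \<longrightarrow> J \<in> snd M \<longrightarrow> card I < card J \<longrightarrow>
            (\<exists>x \<in> J - I. insert x I \<in> snd M))"

definition mrank :: "'a matroid \<Rightarrow> 'a set \<Rightarrow> nat" where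
  "mrank M A = Max (card ` {J. J \<subseteq> A \<and> J \<in> snd M})"

definition uniform :: "nat \<Rightarrow> 'a set \<Rightarrow> 'a matroid" where
  "uniform r X = (X, {I. I \<subseteq> X \<and> card I \<le> r})"

definition dsum2 :: "'a matroid \<Rightarrow> 'a matroid \<Rightarrow> 'a matroid" where
  "dsum2 M1 M2 = (fst M1 \<union> fst M2,
     {I. I \<subseteq> fst M1 \<union> fst M2 \<and> I \<inter> fst M1 \<in> snd M1 \<and> I \<inter> fst M2 \<in> snd M2})"

definition dsum :: "'i set \<Rightarrow> ('i \<Rightarrow> 'a matroid) \<Rightarrow> 'a matroid" where
  "dsum S M = ((\<Union>s\<in>S. fst (M s)),
     {I. I \<subseteq> (\<Union>s\<in>S. fst (M s)) \<and> (\<forall>s\<in>S. I \<inter> fst (M s) \<in> snd (M s))})"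

definition multi_hypergraph :: "'a set \<Rightarrow> nat \<Rightarrow> (nat \<Rightarrow> 'a set) \<Rightarrow> bool" where
  "multi_hypergraph E n X \<longleftrightarrow> finite E \<and> (\<forall>i\<in>{1..n}. X i \<subseteq> E)"

definition hypergraph :: "'a set \<Rightarrow> nat \<Rightarrow> (nat \<Rightarrow> 'a set) \<Rightarrow> bool" where
  "hypergraph E n X \<longleftrightarrow> multi_hypergraph E n X \<and> inj_on X {1..n} \<and> (\<forall>i\<in>{1..n}. X i \<noteq> {})"

definition line_adj :: "(nat \<Rightarrow> 'a set) \<Rightarrow> nat \<Rightarrow> nat \<Rightarrow> bool" where
  "line_adj X i j \<longleftrightarrow> i \<noteq> j \<and> X i \<inter> X j \<noteq> {}"

definition proper_colorings :: "nat \<Rightarrow> (nat \<Rightarrow> 'a set) \<Rightarrow> nat \<Rightarrow> (nat \<Rightarrow> nat) set" where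
  "proper_colorings n X k = {c \<in> {1..n} \<rightarrow>\<^sub>E {1..k}.
      \<forall>i\<in>{1..n}. \<forall>j\<in>{1..n}. line_adj X i j \<longrightarrow> c i \<noteq> c j}"

definition chi_line :: "nat \<Rightarrow> (nat \<Rightarrow> 'a set) \<Rightarrow> nat" where
  "chi_line n X = (LEAST k. k \<ge> 1 \<and> proper_colorings n X k \<noteq> {})"

definition Delta :: "'a set \<Rightarrow> ('a set \<Rightarrow> int) \<Rightarrow> nat \<Rightarrow> (nat \<Rightarrow> 'a matroid) set" where
  "Delta E \<rho> k = {N \<in> {1..k} \<rightarrow>\<^sub>E UNIV. (\<forall>i\<in>{1..k}. matroid_on E (N i)) \<and>
      (\<forall>A. A \<subseteq> E \<longrightarrow> \<rho> A = (\<Sum>i=1..k. int (mrank (N i) A)))}"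

definition chi_poly :: "'a set \<Rightarrow> ('a set \<Rightarrow> int) \<Rightarrow> enat" where
  "chi_poly E \<rho> = (if \<exists>k\<ge>1. Delta E \<rho> k \<noteq> {}
      then enat (LEAST k. k \<ge> 1 \<and> Delta E \<rho> k \<noteq> {}) else \<infinity>)"

definition rho_H :: "'a set \<Rightarrow> nat \<Rightarrow> (nat \<Rightarrow> 'a set) \<Rightarrow> (nat \<Rightarrow> nat) \<Rightarrow> 'a set \<Rightarrow> int" where
  "rho_H E n X t A = (\<Sum>i=1..n. int (mrank (dsum2 (uniform (t i) (X i)) (uniform 0 (E - X i))) A))"

definition phi :: "'a set \<Rightarrow> nat \<Rightarrow> (nat \<Rightarrow> 'a set) \<Rightarrow> (nat \<Rightarrow> nat) \<Rightarrow> nat \<Rightarrow> (nat \<Rightarrow> nat) \<Rightarrow> (nat \<Rightarrow> 'a matroid)" where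
  "phi E n X t k c = (\<lambda>i\<in>{1..k}.
      dsum2 (dsum {h\<in>{1..n}. c h = i} (\<lambda>h. uniform (t h) (X h)))
            (uniform 0 (E - (\<Union>h\<in>{h\<in>{1..n}. c h = i}. X h))))"

end

theory Submission
  imports Defs
begin

definition pfam :: "nat set \<Rightarrow> (nat \<Rightarrow> 'a set) \<Rightarrow> (nat \<Rightarrow> nat) \<Rightarrow> 'a set set" where
  "pfam S X t = {I. I \<subseteq> (\<Union>h\<in>S. X h) \<and> (\<forall>h\<in>S. card (I \<inter> X h) \<le> t h)}"

definition djf :: "nat set \<Rightarrow> (nat \<Rightarrow> 'a set) \<Rightarrow> bool" where
  "djf S X \<longleftrightarrow> (\<forall>a\<in>S. \<forall>b\<in>S. a \<noteq> b \<longrightarrow> X a \<inter> X b = {})"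

lemma card_split:
  assumes "finite S" "djf S X" "J \<subseteq> (\<Union>h\<in>S. X h)" "finite J"
  shows "card J = (\<Sum>h\<in>S. card (J \<inter> X h))"
proof -
  have "J = (\<Union>h\<in>S. J \<inter> X h)" using assms(3) by blast
  hence "card J = card (\<Union>h\<in>S. J \<inter> X h)" by simp
  also have "\<dots> = (\<Sum>h\<in>S. card (J \<inter> X h))"
    by (rule card_UN_disjoint) (use assms in \<open>auto simp: djf_def\<close>)
  finally show ?thesis .
qed

lemma pfam_matroid:
  assumes "finite E" "finite S" "djf S X" "\<forall>h\<in>S. X h \<subseteq> E"
  shows "matroid_on E (E, pfam S X t)"
proof -
  have U: "(\<Union>h\<in>S. X h) \<subseteq> E" using assms by auto
  have fin: "finite I" if "I \<in> pfam S X t" for I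
  proof -
    have "I \<subseteq> E" using that U by (auto simp: pfam_def)
    thus ?thesis using assms(1) finite_subset by blast
  qed
  have down: "I \<in> pfam S X t" if J: "J \<in> pfam S X t" and IJ: "I \<subseteq> J" for I J
  proof -
    have "finite J" using fin J .
    show "I \<in> pfam S X t" unfolding pfam_def
    proof (intro CollectI conjI ballI)
      show "I \<subseteq> (\<Union>h\<in>S. X h)" using J IJ by (auto simp: pfam_def)
      fix h assume h: "h \<in> S"
      have "card (I \<inter> X h) \<le> card (J \<inter> X h)" by (rule card_mono) (use \<open>finite J\<close> IJ in auto)
      also have "\<dots> \<le> t h" using J h by (auto simp: pfam_def)
      finally show "card (I \<inter> X h) \<le> t h" .
    qed
  qed
  have aug: "\<exists>x\<in>J - I. insert x I \<in> pfam S X t"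
    if I: "I \<in> pfam S X t" and J: "J \<in> pfam S X t" and lt: "card I < card J" for I J
  proof -
    have cI: "card I = (\<Sum>h\<in>S. card (I \<inter> X h))"
      using card_split[OF assms(2,3)] I fin[OF I] by (auto simp: pfam_def)
    have cJ: "card J = (\<Sum>h\<in>S. card (J \<inter> X h))"
      using card_split[OF assms(2,3)] J fin[OF J] by (auto simp: pfam_def)
    have "\<exists>h\<in>S. card (I \<inter> X h) < card (J \<inter> X h)"
    proof (rule ccontr)
      assume "\<not> ?thesis"
      hence "(\<Sum>h\<in>S. card (J \<inter> X h)) \<le> (\<Sum>h\<in>S. card (I \<inter> X h))" by (intro sum_mono) auto
      thus False using lt cI cJ by simp
    qed
    then obtain h where h: "h \<in> S" "card (I \<inter> X h) < card (J \<inter> X h)" by blast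
    have "\<not> (J \<inter> X h \<subseteq> I \<inter> X h)"
    proof
      assume "J \<inter> X h \<subseteq> I \<inter> X h"
      hence "card (J \<inter> X h) \<le> card (I \<inter> X h)" using fin[OF I] by (intro card_mono) auto
      thus False using h by simp
    qed
    then obtain x where x: "x \<in> J" "x \<in> X h" "x \<notin> I" by blast
    have "insert x I \<in> pfam S X t" unfolding pfam_def
    proof (intro CollectI conjI ballI)
      show "insert x I \<subseteq> (\<Union>h\<in>S. X h)" using I x h by (auto simp: pfam_def)
      fix g assume g: "g \<in> S"
      show "card (insert x I \<inter> X g) \<le> t g"
      proof (cases "g = h")
        case True
        have "insert x I \<inter> X h = insert x (I \<inter> X h)" using x by auto
        hence "card (insert x I \<inter> X g) = Suc (card (I \<inter> X h))" using True x fin[OF I] by simp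
        also have "\<dots> \<le> card (J \<inter> X h)" using h by simp
        also have "\<dots> \<le> t h" using J h by (auto simp: pfam_def)
        finally show ?thesis using True by simp
      next
        case False
        hence "x \<notin> X g" using x g h assms(3) by (auto simp: djf_def)
        hence "insert x I \<inter> X g = I \<inter> X g" by auto
        thus ?thesis using I g by (auto simp: pfam_def)
      qed
    qed
    thus ?thesis using x by blast
  qed
  have e: "{} \<in> pfam S X t" by (simp add: pfam_def)
  have p: "pfam S X t \<subseteq> Pow E" using U by (auto simp: pfam_def)
  show ?thesis unfolding matroid_on_def fst_conv snd_conv
  proof (intro conjI allI impI)
    show "finite E" by fact
    show "pfam S X t \<subseteq> Pow E" by fact
    show "{} \<in> pfam S X t" by fact
  next
    fix I J assume "J \<in> pfam S X t" "I \<subseteq> J"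
    thus "I \<in> pfam S X t" by (rule down)
  next
    fix I J assume "I \<in> pfam S X t" "J \<in> pfam S X t" "card I < card J"
    thus "\<exists>x\<in>J - I. insert x I \<in> pfam S X t" by (rule aug)
  qed (rule refl)
qed

lemma pfam_rank:
  assumes "finite S" "djf S X" "finite (\<Union>h\<in>S. X h)"
  shows "mrank (E, pfam S X t) A = (\<Sum>h\<in>S. min (t h) (card (A \<inter> X h)))"
proof -
  let ?U = "\<Union>h\<in>S. X h"
  let ?C = "{J. J \<subseteq> A \<and> J \<in> pfam S X t}"
  have finX: "\<forall>h\<in>S. finite (X h)" using assms(1,3) by simp
  have finC: "finite ?C"
    by (rule finite_subset[of _ "Pow ?U"]) (use assms(3) in \<open>auto simp: pfam_def\<close>)
  have ub: "card J \<le> (\<Sum>h\<in>S. min (t h) (card (A \<inter> X h)))" if "J \<in> ?C" for J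
  proof -
    have JU: "J \<subseteq> ?U" and JA: "J \<subseteq> A" and Jt: "\<forall>h\<in>S. card (J \<inter> X h) \<le> t h"
      using that by (auto simp: pfam_def)
    have "finite J" using JU assms(3) finite_subset by blast
    have "card J = (\<Sum>h\<in>S. card (J \<inter> X h))" using card_split[OF assms(1,2) JU \<open>finite J\<close>] .
    also have "\<dots> \<le> (\<Sum>h\<in>S. min (t h) (card (A \<inter> X h)))"
    proof (rule sum_mono)
      fix h assume h: "h \<in> S"
      have "card (J \<inter> X h) \<le> card (A \<inter> X h)" by (rule card_mono) (use finX h JA in auto)
      thus "card (J \<inter> X h) \<le> min (t h) (card (A \<inter> X h))" using Jt h by simp
    qed
    finally show ?thesis .
  qed
  have "\<forall>h\<in>S. \<exists>T. T \<subseteq> A \<inter> X h \<and> card T = min (t h) (card (A \<inter> X h))"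
  proof
    fix h assume "h \<in> S"
    have "min (t h) (card (A \<inter> X h)) \<le> card (A \<inter> X h)" by simp
    then obtain T where "T \<subseteq> A \<inter> X h" "card T = min (t h) (card (A \<inter> X h))"
      by (rule obtain_subset_with_card_n)
    thus "\<exists>T. T \<subseteq> A \<inter> X h \<and> card T = min (t h) (card (A \<inter> X h))" by blast
  qed
  from bchoice[OF this] obtain f where f: "\<forall>h\<in>S. f h \<subseteq> A \<inter> X h \<and> card (f h) = min (t h) (card (A \<inter> X h))"
    by blast
  let ?J = "\<Union>h\<in>S. f h"
  have cardJ: "card ?J = (\<Sum>h\<in>S. card (f h))"
  proof (rule card_UN_disjoint)
    show "finite S" by fact
    show "\<forall>i\<in>S. finite (f i)"
    proof
      fix i assume i: "i \<in> S"
      have "f i \<subseteq> X i" using f i by blast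
      thus "finite (f i)" using finX i finite_subset by blast
    qed
    show "\<forall>i\<in>S. \<forall>j\<in>S. i \<noteq> j \<longrightarrow> f i \<inter> f j = {}" using f assms(2) unfolding djf_def by blast
  qed
  have JX: "?J \<inter> X g = f g" if g: "g \<in> S" for g
  proof
    show "f g \<subseteq> ?J \<inter> X g" using f g by blast
    show "?J \<inter> X g \<subseteq> f g"
    proof
      fix z assume "z \<in> ?J \<inter> X g"
      then obtain h where h: "h \<in> S" "z \<in> f h" "z \<in> X g" by blast
      have "z \<in> X h" using f h by blast
      hence "h = g" using h g assms(2) unfolding djf_def by blast
      thus "z \<in> f g" using h by simp
    qed
  qed
  have JC: "?J \<in> ?C" unfolding pfam_def
  proof (intro CollectI conjI ballI)
    show "?J \<subseteq> A" using f by blast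
    show "?J \<subseteq> ?U" using f by blast
    fix g assume g: "g \<in> S"
    show "card (?J \<inter> X g) \<le> t g" using JX[OF g] f g by simp
  qed
  have "Max (card ` ?C) = (\<Sum>h\<in>S. min (t h) (card (A \<inter> X h)))"
  proof (rule Max_eqI)
    show "finite (card ` ?C)" using finC by simp
    show "y \<le> (\<Sum>h\<in>S. min (t h) (card (A \<inter> X h)))" if "y \<in> card ` ?C" for y
      using that ub by blast
    show "(\<Sum>h\<in>S. min (t h) (card (A \<inter> X h))) \<in> card ` ?C"
    proof (rule rev_image_eqI[OF JC])
      have "(\<Sum>h\<in>S. card (f h)) = (\<Sum>h\<in>S. min (t h) (card (A \<inter> X h)))"
        using f by (intro sum.cong) auto
      thus "(\<Sum>h\<in>S. min (t h) (card (A \<inter> X h))) = card ?J" using cardJ by simp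
    qed
  qed
  thus ?thesis by (simp add: mrank_def)
qed

lemma phi_eq:
  assumes "multi_hypergraph E n X" "i \<in> {1..k}"
  shows "phi E n X t k c i = (E, pfam {h\<in>{1..n}. c h = i} X t)"
proof -
  define S where "S = {h\<in>{1..n}. c h = i}"
  define U where "U = (\<Union>h\<in>S. X h)"
  have U: "U \<subseteq> E" using assms(1) by (auto simp: multi_hypergraph_def U_def S_def)
  have fE: "finite E" using assms(1) by (simp add: multi_hypergraph_def)
  have XU: "\<And>s. s \<in> S \<Longrightarrow> X s \<subseteq> U" by (auto simp: U_def)
  have ph: "phi E n X t k c i = dsum2 (dsum S (\<lambda>h. uniform (t h) (X h))) (uniform 0 (E - U))"
    using assms(2) by (simp add: phi_def S_def U_def)
  have f1: "fst (dsum S (\<lambda>h. uniform (t h) (X h))) = U" by (simp add: dsum_def uniform_def U_def)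
  have s1: "snd (dsum S (\<lambda>h. uniform (t h) (X h))) = {I. I \<subseteq> U \<and> (\<forall>s\<in>S. card (I \<inter> X s) \<le> t s)}"
    by (auto simp: dsum_def uniform_def U_def)
  have f2: "fst (uniform 0 (E - U)) = E - U" by (simp add: uniform_def)
  have s2: "snd (uniform 0 (E - U)) = {I. I \<subseteq> E - U \<and> card I \<le> 0}" by (simp add: uniform_def)
  have UE: "U \<union> (E - U) = E" using U by blast
  have key: "(I \<subseteq> E \<and> I \<inter> U \<in> {I. I \<subseteq> U \<and> (\<forall>s\<in>S. card (I \<inter> X s) \<le> t s)}
      \<and> I \<inter> (E - U) \<in> {I. I \<subseteq> E - U \<and> card I \<le> 0}) \<longleftrightarrow> I \<in> pfam S X t" for I
  proof
    assume A: "I \<subseteq> E \<and> I \<inter> U \<in> {I. I \<subseteq> U \<and> (\<forall>s\<in>S. card (I \<inter> X s) \<le> t s)}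
      \<and> I \<inter> (E - U) \<in> {I. I \<subseteq> E - U \<and> card I \<le> 0}"
    have "finite (I \<inter> (E - U))" using fE by simp
    hence "I \<inter> (E - U) = {}" using A by simp
    hence IU: "I \<subseteq> U" using A by blast
    have "\<forall>s\<in>S. card (I \<inter> X s) \<le> t s"
    proof
      fix s assume s: "s \<in> S"
      have "I \<inter> U \<inter> X s = I \<inter> X s" using XU[OF s] by blast
      thus "card (I \<inter> X s) \<le> t s" using A s by auto
    qed
    thus "I \<in> pfam S X t" using IU by (simp add: pfam_def U_def)
  next
    assume B: "I \<in> pfam S X t"
    hence IU: "I \<subseteq> U" by (simp add: pfam_def U_def)
    have "\<forall>s\<in>S. card (I \<inter> U \<inter> X s) \<le> t s"
    proof
      fix s assume s: "s \<in> S"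
      have "I \<inter> U \<inter> X s = I \<inter> X s" using XU[OF s] by blast
      thus "card (I \<inter> U \<inter> X s) \<le> t s" using B s by (auto simp: pfam_def)
    qed
    moreover have "I \<inter> (E - U) = {}" using IU by blast
    ultimately show "I \<subseteq> E \<and> I \<inter> U \<in> {I. I \<subseteq> U \<and> (\<forall>s\<in>S. card (I \<inter> X s) \<le> t s)}
      \<and> I \<inter> (E - U) \<in> {I. I \<subseteq> E - U \<and> card I \<le> 0}" using IU U by auto
  qed
  have "dsum2 (dsum S (\<lambda>h. uniform (t h) (X h))) (uniform 0 (E - U)) = (E, pfam S X t)"
    unfolding dsum2_def f1 s1 f2 s2 UE using key by auto
  thus ?thesis using ph by (simp add: S_def)
qed

lemma Mh_eq:
  assumes "X h \<subseteq> E" "finite E"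
  shows "dsum2 (uniform (t h) (X h)) (uniform 0 (E - X h)) = (E, pfam {h} X t)"
proof -
  have UE: "X h \<union> (E - X h) = E" using assms by blast
  have key: "(I \<subseteq> E \<and> I \<inter> X h \<in> {I. I \<subseteq> X h \<and> card I \<le> t h}
      \<and> I \<inter> (E - X h) \<in> {I. I \<subseteq> E - X h \<and> card I \<le> 0}) \<longleftrightarrow> I \<in> pfam {h} X t" for I
  proof
    assume A: "I \<subseteq> E \<and> I \<inter> X h \<in> {I. I \<subseteq> X h \<and> card I \<le> t h}
      \<and> I \<inter> (E - X h) \<in> {I. I \<subseteq> E - X h \<and> card I \<le> 0}"
    have "finite (I \<inter> (E - X h))" using assms by simp
    hence "I \<inter> (E - X h) = {}" using A by simp
    hence "I \<subseteq> X h" using A by blast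
    thus "I \<in> pfam {h} X t" using A by (simp add: pfam_def)
  next
    assume B: "I \<in> pfam {h} X t"
    thus "I \<subseteq> E \<and> I \<inter> X h \<in> {I. I \<subseteq> X h \<and> card I \<le> t h}
      \<and> I \<inter> (E - X h) \<in> {I. I \<subseteq> E - X h \<and> card I \<le> 0}" using assms by (auto simp: pfam_def)
  qed
  show ?thesis unfolding dsum2_def uniform_def fst_conv snd_conv UE using key by auto
qed

definition sepP :: "'a set set \<Rightarrow> 'a \<Rightarrow> 'a \<Rightarrow> bool" where
  "sepP F x y \<longleftrightarrow> (\<forall>I. I \<in> F \<longrightarrow> x \<notin> I \<longrightarrow> y \<notin> I \<longrightarrow> insert x I \<in> F \<longrightarrow> insert y I \<in> F
      \<longrightarrow> insert x (insert y I) \<in> F)"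

lemma sep_diff:
  assumes "djf S X" "a \<in> S" "b \<in> S" "a \<noteq> b" "x \<in> X a" "y \<in> X b"
  shows "sepP (pfam S X t) x y"
  unfolding sepP_def
proof (intro allI impI)
  fix I assume Ix: "insert x I \<in> pfam S X t" and Iy: "insert y I \<in> pfam S X t"
  have ya: "y \<notin> X a" and xb: "x \<notin> X b" using assms unfolding djf_def by blast+
  show "insert x (insert y I) \<in> pfam S X t" unfolding pfam_def
  proof (intro CollectI conjI ballI)
    show "insert x (insert y I) \<subseteq> (\<Union>h\<in>S. X h)" using Ix Iy by (auto simp: pfam_def)
    fix g assume g: "g \<in> S"
    show "card (insert x (insert y I) \<inter> X g) \<le> t g"
    proof (cases "g = a")
      case True
      hence "insert x (insert y I) \<inter> X g = insert x I \<inter> X g" using ya by auto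
      thus ?thesis using Ix g by (auto simp: pfam_def)
    next
      case False
      show ?thesis
      proof (cases "g = b")
        case True
        hence "insert x (insert y I) \<inter> X g = insert y I \<inter> X g" using xb by auto
        thus ?thesis using Iy g by (auto simp: pfam_def)
      next
        case False': False
        have "x \<notin> X g" "y \<notin> X g" using assms g False False' unfolding djf_def by blast+
        hence "insert x (insert y I) \<inter> X g = insert x I \<inter> X g" by auto
        thus ?thesis using Ix g by (auto simp: pfam_def)
      qed
    qed
  qed
qed

lemma sep_same:
  assumes "djf S X" "a \<in> S" "x \<in> X a" "y \<in> X a" "x \<noteq> y" "finite (X a)" "0 < t a" "t a < card (X a)"
  shows "\<not> sepP (pfam S X t) x y"
proof
  assume sep: "sepP (pfam S X t) x y"
  have c2: "card (X a - {x, y}) = card (X a) - 2"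
    using assms by (subst card_Diff_subset) auto
  hence "t a - 1 \<le> card (X a - {x, y})" using assms by linarith
  then obtain I where I: "I \<subseteq> X a - {x, y}" "card I = t a - 1" "finite I"
    by (rule obtain_subset_with_card_n)
  have mem: "J \<in> pfam S X t" if "J \<subseteq> X a" "card J \<le> t a" for J
    unfolding pfam_def
  proof (intro CollectI conjI ballI)
    show "J \<subseteq> (\<Union>h\<in>S. X h)" using that assms(2) by blast
    fix g assume g: "g \<in> S"
    show "card (J \<inter> X g) \<le> t g"
    proof (cases "g = a")
      case True
      hence "J \<inter> X g = J" using that by blast
      thus ?thesis using that True by simp
    next
      case False
      hence "J \<inter> X g = {}" using that assms(1,2) g unfolding djf_def by blast
      thus ?thesis by simp
    qed
  qed
  have xI: "x \<notin> I" "y \<notin> I" using I by auto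
  have "I \<in> pfam S X t" using I by (intro mem) auto
  moreover have "insert x I \<in> pfam S X t" using I xI assms by (intro mem) auto
  moreover have "insert y I \<in> pfam S X t" using I xI assms by (intro mem) auto
  ultimately have "insert x (insert y I) \<in> pfam S X t" using sep xI unfolding sepP_def by blast
  hence "card (insert x (insert y I) \<inter> X a) \<le> t a" using assms(2) by (auto simp: pfam_def)
  moreover have "insert x (insert y I) \<inter> X a = insert x (insert y I)" using I assms by auto
  moreover have "card (insert x (insert y I)) = t a + 1" using I xI assms by simp
  ultimately show False by simp
qed

lemma single_in:
  assumes "djf S X" "h \<in> S" "x \<in> X h" "1 \<le> t h"
  shows "{x} \<in> pfam S X t"
  unfolding pfam_def
proof (intro CollectI conjI ballI)
  show "{x} \<subseteq> (\<Union>h\<in>S. X h)" using assms by blast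
  fix g assume g: "g \<in> S"
  show "card ({x} \<inter> X g) \<le> t g"
  proof (cases "g = h")
    case True thus ?thesis using assms by simp
  next
    case False
    hence "{x} \<inter> X g = {}" using assms g unfolding djf_def by blast
    thus ?thesis by simp
  qed
qed

lemma inj_aux:
  assumes "pfam S X t = pfam S' X t" "djf S X" "djf S' X"
   "h \<in> S" "h' \<in> S'" "x \<in> X h" "x \<in> X h'" "finite (X h)"
   "t h = 1 \<or> (0 < t h \<and> t h < card (X h))"
  shows "X h \<subseteq> X h'"
proof
  fix y assume y: "y \<in> X h"
  show "y \<in> X h'"
  proof (rule ccontr)
    assume ny: "y \<notin> X h'"
    hence xy: "x \<noteq> y" using assms by auto
    have "card {x, y} \<le> card (X h)" using assms y by (intro card_mono) auto
    hence "2 \<le> card (X h)" using xy by simp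
    hence th: "0 < t h" "t h < card (X h)" using assms(9) by auto
    have nsep: "\<not> sepP (pfam S X t) x y" by (rule sep_same) (use assms y xy th in auto)
    have "{y} \<in> pfam S X t" by (rule single_in) (use assms y th in auto)
    hence "{y} \<in> pfam S' X t" using assms(1) by simp
    then obtain h'' where h'': "h'' \<in> S'" "y \<in> X h''" by (auto simp: pfam_def)
    have "h'' \<noteq> h'" using h'' ny by auto
    hence "sepP (pfam S' X t) x y" by (intro sep_diff[of S' X h' h'']) (use assms h'' in auto)
    thus False using nsep assms(1) by simp
  qed
qed

theorem lemma2p8:
  fixes E :: "'a set" and n :: nat and X :: "nat \<Rightarrow> 'a set" and t :: "nat \<Rightarrow> nat"
  assumes "multi_hypergraph E n X"
    and "\<forall>i\<in>{1..n}. t i \<le> card (X i)"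
  shows "(\<forall>k\<ge>1. \<forall>c\<in>proper_colorings n X k. phi E n X t k c \<in> Delta E (rho_H E n X t) k)
     \<and> chi_poly E (rho_H E n X t) \<le> enat (chi_line n X)
     \<and> ((hypergraph E n X \<and> (\<forall>i\<in>{1..n}. t i = 1 \<or> (0 < t i \<and> t i < card (X i))))
         \<longrightarrow> (\<forall>k\<ge>1. inj_on (phi E n X t k) (proper_colorings n X k)))"
proof -
  have mh: "multi_hypergraph E n X" by fact
  have fE: "finite E" and XE: "\<forall>i\<in>{1..n}. X i \<subseteq> E" using mh by (auto simp: multi_hypergraph_def)
  have djS: "djf {h\<in>{1..n}. c h = i} X" if "c \<in> proper_colorings n X k" for c k i
    unfolding djf_def
  proof (intro ballI impI)
    fix a b assume a: "a \<in> {h\<in>{1..n}. c h = i}" and b: "b \<in> {h\<in>{1..n}. c h = i}" and ab: "a \<noteq> b"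
    have pc: "\<forall>i\<in>{1..n}. \<forall>j\<in>{1..n}. line_adj X i j \<longrightarrow> c i \<noteq> c j"
      using that by (simp add: proper_colorings_def)
    have "a \<in> {1..n}" "b \<in> {1..n}" "c a = c b" using a b by auto
    hence "\<not> line_adj X a b" using pc by blast
    thus "X a \<inter> X b = {}" using ab by (simp add: line_adj_def)
  qed
  have rho: "rho_H E n X t A = (\<Sum>h=1..n. int (min (t h) (card (A \<inter> X h))))" for A
    unfolding rho_H_def
  proof (rule sum.cong[OF refl])
    fix h assume h: "h \<in> {1..n}"
    have fX: "finite (X h)" using XE h fE finite_subset by blast
    have "mrank (dsum2 (uniform (t h) (X h)) (uniform 0 (E - X h))) A = mrank (E, pfam {h} X t) A"
      using Mh_eq[of X h E t] XE h fE by simp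
    also have "\<dots> = (\<Sum>g\<in>{h}. min (t g) (card (A \<inter> X g)))"
      by (rule pfam_rank) (use fX in \<open>auto simp: djf_def\<close>)
    finally show "int (mrank (dsum2 (uniform (t h) (X h)) (uniform 0 (E - X h))) A)
        = int (min (t h) (card (A \<inter> X h)))" by simp
  qed
  have P1: "\<forall>k\<ge>1. \<forall>c\<in>proper_colorings n X k. phi E n X t k c \<in> Delta E (rho_H E n X t) k"
  proof (intro allI impI ballI)
    fix k c assume k: "1 \<le> k" and c: "c \<in> proper_colorings n X k"
    have cr: "c ` {1..n} \<subseteq> {1..k}" using c by (auto simp: proper_colorings_def PiE_def Pi_def)
    have finU: "finite (\<Union>h\<in>{h\<in>{1..n}. c h = i}. X h)" for i
    proof (rule finite_subset[OF _ fE])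
      show "(\<Union>h\<in>{h\<in>{1..n}. c h = i}. X h) \<subseteq> E" using XE by blast
    qed
    show "phi E n X t k c \<in> Delta E (rho_H E n X t) k" unfolding Delta_def
    proof (intro CollectI conjI ballI allI impI)
      show "phi E n X t k c \<in> {1..k} \<rightarrow>\<^sub>E UNIV" by (simp add: phi_def)
    next
      fix i assume i: "i \<in> {1..k}"
      show "matroid_on E (phi E n X t k c i)" unfolding phi_eq[OF mh i]
        by (rule pfam_matroid) (use fE djS[OF c, of i] XE in auto)
    next
      fix A assume A: "A \<subseteq> E"
      have "(\<Sum>i=1..k. int (mrank (phi E n X t k c i) A))
          = (\<Sum>i=1..k. \<Sum>h\<in>{h\<in>{1..n}. c h = i}. int (min (t h) (card (A \<inter> X h))))"
      proof (rule sum.cong[OF refl])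
        fix i assume i: "i \<in> {1..k}"
        have "mrank (phi E n X t k c i) A = (\<Sum>h\<in>{h\<in>{1..n}. c h = i}. min (t h) (card (A \<inter> X h)))"
          unfolding phi_eq[OF mh i] by (rule pfam_rank) (use djS[OF c, of i] finU in auto)
        thus "int (mrank (phi E n X t k c i) A) = (\<Sum>h\<in>{h\<in>{1..n}. c h = i}. int (min (t h) (card (A \<inter> X h))))"
          by simp
      qed
      also have "\<dots> = (\<Sum>h=1..n. int (min (t h) (card (A \<inter> X h))))"
        by (rule sum.group) (use cr in auto)
      finally show "rho_H E n X t A = (\<Sum>i=1..k. int (mrank (phi E n X t k c i) A))"
        using rho by simp
    qed
  qed
  have P2: "chi_poly E (rho_H E n X t) \<le> enat (chi_line n X)"
  proof -
    define c0 where "c0 = (\<lambda>h\<in>{1..n}. h)"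
    have c0P: "c0 \<in> {1..n} \<rightarrow>\<^sub>E {1..max n 1}" unfolding c0_def restrict_PiE by (auto simp: Pi_def)
    have c0a: "c0 i = i" if "i \<in> {1..n}" for i using that by (simp add: c0_def)
    have "\<forall>i\<in>{1..n}. \<forall>j\<in>{1..n}. line_adj X i j \<longrightarrow> c0 i \<noteq> c0 j"
      using c0a by (simp add: line_adj_def)
    hence "c0 \<in> proper_colorings n X (max n 1)" using c0P unfolding proper_colorings_def by blast
    moreover have "(1::nat) \<le> max n 1" by simp
    ultimately have ex: "\<exists>k. k \<ge> 1 \<and> proper_colorings n X k \<noteq> {}" by blast
    define K where "K = chi_line n X"
    have K: "K \<ge> 1 \<and> proper_colorings n X K \<noteq> {}"
      unfolding K_def chi_line_def by (rule LeastI_ex[OF ex])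
    then obtain c where c: "c \<in> proper_colorings n X K" by blast
    have "phi E n X t K c \<in> Delta E (rho_H E n X t) K" using P1 K c by blast
    hence D: "Delta E (rho_H E n X t) K \<noteq> {}" by blast
    hence ex2: "\<exists>k\<ge>1. Delta E (rho_H E n X t) k \<noteq> {}" using K by blast
    have "(LEAST k. k \<ge> 1 \<and> Delta E (rho_H E n X t) k \<noteq> {}) \<le> K"
      by (rule Least_le) (use K D in auto)
    thus ?thesis using ex2 unfolding chi_poly_def K_def by simp
  qed
  have P3: "(hypergraph E n X \<and> (\<forall>i\<in>{1..n}. t i = 1 \<or> (0 < t i \<and> t i < card (X i))))
         \<longrightarrow> (\<forall>k\<ge>1. inj_on (phi E n X t k) (proper_colorings n X k))"
  proof (intro impI allI)
    fix k :: nat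
    assume hyp: "hypergraph E n X \<and> (\<forall>i\<in>{1..n}. t i = 1 \<or> (0 < t i \<and> t i < card (X i)))"
      and k: "1 \<le> k"
    have injX: "inj_on X {1..n}" and ne: "\<forall>i\<in>{1..n}. X i \<noteq> {}" using hyp unfolding hypergraph_def by blast+
    have tc: "\<forall>i\<in>{1..n}. t i = 1 \<or> (0 < t i \<and> t i < card (X i))" using hyp by blast
    have fX: "finite (X i)" if "i \<in> {1..n}" for i
      using finite_subset[OF bspec[OF XE that] fE] .
    show "inj_on (phi E n X t k) (proper_colorings n X k)"
    proof (rule inj_onI)
      fix c c' assume c: "c \<in> proper_colorings n X k" and c': "c' \<in> proper_colorings n X k"
        and eq: "phi E n X t k c = phi E n X t k c'"
      have cE: "c \<in> {1..n} \<rightarrow>\<^sub>E {1..k}" and c'E: "c' \<in> {1..n} \<rightarrow>\<^sub>E {1..k}"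
        using c c' unfolding proper_colorings_def by blast+
      show "c = c'"
      proof (rule ext)
        fix h
        show "c h = c' h"
        proof (cases "h \<in> {1..n}")
          case False
          show ?thesis using PiE_arb[OF cE False] PiE_arb[OF c'E False] by (rule trans[OF _ sym])
        next
          case True
          define i where "i = c h"
          have i: "i \<in> {1..k}" using cE True unfolding i_def by auto
          have "phi E n X t k c i = phi E n X t k c' i" using eq by simp
          hence pe: "pfam {h\<in>{1..n}. c h = i} X t = pfam {h\<in>{1..n}. c' h = i} X t"
            unfolding phi_eq[OF mh i] by simp
          obtain x where x: "x \<in> X h" using ne True by blast
          have hS: "h \<in> {h\<in>{1..n}. c h = i}" using True i_def by simp
          have "t h = 1 \<or> (0 < t h \<and> t h < card (X h))" using tc True by blast
          hence t1: "1 \<le> t h" by linarith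
          have "{x} \<in> pfam {h\<in>{1..n}. c h = i} X t"
            by (rule single_in[where t=t and X=X, OF djS[OF c, of i] hS x t1])
          hence "{x} \<in> pfam {h\<in>{1..n}. c' h = i} X t" by (rule subst[OF pe])
          hence "{x} \<subseteq> (\<Union>g\<in>{h\<in>{1..n}. c' h = i}. X g)" unfolding pfam_def by blast
          then obtain h' where h': "h' \<in> {h\<in>{1..n}. c' h = i}" "x \<in> X h'" by blast
          have h'n: "h' \<in> {1..n}" using h'(1) by simp
          have fh: "finite (X h)" by (rule fX[OF True])
          have fh': "finite (X h')" by (rule fX[OF h'n])
          have th: "t h = 1 \<or> (0 < t h \<and> t h < card (X h))" using tc True by blast
          have th': "t h' = 1 \<or> (0 < t h' \<and> t h' < card (X h'))" using tc h'n by blast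
          have s1: "X h \<subseteq> X h'"
            by (rule inj_aux[where t=t and X=X, OF pe djS[OF c, of i] djS[OF c', of i] hS h'(1) x h'(2) fh th])
          have s2: "X h' \<subseteq> X h"
            by (rule inj_aux[where t=t and X=X, OF pe[symmetric] djS[OF c', of i] djS[OF c, of i] h'(1) hS h'(2) x fh' th'])
          have "h = h'" using inj_onD[OF injX _ True h'n] s1 s2 by blast
          thus ?thesis using h' i_def by simp
        qed
      qed
    qed
  qed
  show ?thesis using P1 P2 P3 by (intro conjI)
qed

end
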